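(* Every connected finite-dimensional $\Delta$-complex $\mathcal C$ admits an immersion into a $\Delta$-complex that has exactly one $0$-cell.
   Context: A $\Delta$-complex is a CW-complex $\mathcal C$ in which each $k$-cell $c$ has a distinguished characteristic map $\sigma_c\colon\Delta^k\to\mathcal C$, where $\Delta^k=[v_0,\dots,v_k]$ is the standard $k$-simplex with ordered vertices $v_0<\dots<v_k$, such that the restriction of $\sigma_c$ to each $(k-1)$-dimensional face (identified with $\Delta^{k-1}$ via the order-preserving linear homeomorphism) is the distinguished characteristic map of some $(k-1)$-cell. A map $f\colon\mathcal D\to\mathcal C$ between $\Delta$-complexes commutes with the characteristic maps if for every $k$-cell $d$ of $\mathcal D$, $f(d)$ is a $k$-cell of $\mathcal C$ and $f\circ\sigma_d=\sigma_{f(d)}$. An immersion is a continuous map that commutes with the characteristic maps and is a local homeomorphism onto its image (every point has an open neighbourhood $U$ with $f|_U$ a homeomorphism onto $f(U)\subseteq f(\mathcal D)$). *)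

theory Defs
  imports "HOL-Analysis.Analysis"
begin

text \<open>Standard k-simplex [v_0,...,v_k], points given by barycentric coordinates
  as functions nat => real vanishing beyond k (product topology on nat => real,
  which restricted to this set is the usual Euclidean topology).\<close>

definition std_simplex :: "nat \<Rightarrow> (nat \<Rightarrow> real) set" where
  "std_simplex k = {t. (\<forall>i. 0 \<le> t i) \<and> (\<forall>i>k. t i = 0) \<and> (\<Sum>i\<le>k. t i) = 1}"

definition open_simplex :: "nat \<Rightarrow> (nat \<Rightarrow> real) set" where
  "open_simplex k = {t \<in> std_simplex k. \<forall>i\<le>k. 0 < t i}"

definition simplex_top :: "nat \<Rightarrow> (nat \<Rightarrow> real) topology" where
  "simplex_top k = top_of_set (std_simplex k)"

text \<open>Order-preserving linear homeomorphism of Delta^(k-1) onto the i-th face of Delta^k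
  (the face opposite v_i): insert a zero coordinate at position i.\<close>

definition face_map :: "nat \<Rightarrow> (nat \<Rightarrow> real) \<Rightarrow> (nat \<Rightarrow> real)" where
  "face_map i t = (\<lambda>j. if j < i then t j else if j = i then 0 else t (j - 1))"

text \<open>Delta-complex structure (Hatcher): a space X with characteristic maps
  sigma c : Delta^(dm c) -> X for the cells c in I.\<close>

definition delta_complex ::
  "'x topology \<Rightarrow> 'c set \<Rightarrow> ('c \<Rightarrow> nat) \<Rightarrow> ('c \<Rightarrow> (nat \<Rightarrow> real) \<Rightarrow> 'x) \<Rightarrow> bool" where
  "delta_complex X I dm \<sigma> \<longleftrightarrow>
     (\<forall>c\<in>I. continuous_map (simplex_top (dm c)) X (\<sigma> c)) \<and>
     (\<forall>c\<in>I. inj_on (\<sigma> c) (open_simplex (dm c))) \<and>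
     (\<forall>x\<in>topspace X. \<exists>c\<in>I. x \<in> \<sigma> c ` open_simplex (dm c) \<and>
        (\<forall>c'\<in>I. x \<in> \<sigma> c' ` open_simplex (dm c') \<longrightarrow> c' = c)) \<and>
     (\<forall>c\<in>I. 0 < dm c \<longrightarrow> (\<forall>i\<le>dm c. \<exists>c'\<in>I. dm c' = dm c - 1 \<and>
        (\<forall>t\<in>std_simplex (dm c - 1). \<sigma> c (face_map i t) = \<sigma> c' t))) \<and>
     (\<forall>U. openin X U \<longleftrightarrow> U \<subseteq> topspace X \<and>
        (\<forall>c\<in>I. openin (simplex_top (dm c)) {t \<in> std_simplex (dm c). \<sigma> c t \<in> U}))"

definition zero_cells :: "'c set \<Rightarrow> ('c \<Rightarrow> nat) \<Rightarrow> 'c set" where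
  "zero_cells I dm = {c \<in> I. dm c = 0}"

definition finite_dimensional :: "'c set \<Rightarrow> ('c \<Rightarrow> nat) \<Rightarrow> bool" where
  "finite_dimensional I dm \<longleftrightarrow> (\<exists>N. \<forall>c\<in>I. dm c \<le> N)"

definition delta_immersion ::
  "'x topology \<Rightarrow> 'c set \<Rightarrow> ('c \<Rightarrow> nat) \<Rightarrow> ('c \<Rightarrow> (nat \<Rightarrow> real) \<Rightarrow> 'x) \<Rightarrow>
   'y topology \<Rightarrow> 'd set \<Rightarrow> ('d \<Rightarrow> nat) \<Rightarrow> ('d \<Rightarrow> (nat \<Rightarrow> real) \<Rightarrow> 'y) \<Rightarrow>
   ('x \<Rightarrow> 'y) \<Rightarrow> bool" where
  "delta_immersion X I dimX \<sigma>X Y J dimY \<sigma>Y f \<longleftrightarrow>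
     continuous_map X Y f \<and>
     (\<exists>\<phi>. \<forall>c\<in>I. \<phi> c \<in> J \<and> dimY (\<phi> c) = dimX c \<and>
        (\<forall>t\<in>std_simplex (dimX c). f (\<sigma>X c t) = \<sigma>Y (\<phi> c) t)) \<and>
     (\<forall>x\<in>topspace X. \<exists>U. openin X U \<and> x \<in> U \<and>
        homeomorphic_map (subtopology X U) (subtopology Y (f ` U)) f)"

end

theory Submission
  imports Defs
begin

definition ev :: "nat \<Rightarrow> nat \<Rightarrow> real" where "ev k = (\<lambda>j. if j = k then 1 else 0)"
definition dl :: "nat \<Rightarrow> nat \<Rightarrow> nat" where "dl i k = (if k < i then k else Suc k)"

lemma sum_reindex_dl:
  fixes h :: "nat \<Rightarrow> 'a::comm_monoid_add"
  assumes "i \<le> Suc m"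
  shows "(\<Sum>k\<le>Suc m. h k) = h i + (\<Sum>k\<le>m. h (dl i k))"
proof -
  have inj: "inj_on (dl i) {..m}" by (auto simp: inj_on_def dl_def split: if_splits)
  have eq: "{..Suc m} = insert i (dl i ` {..m})"
  proof
    show "{..Suc m} \<subseteq> insert i (dl i ` {..m})"
    proof
      fix x assume x: "x \<in> {..Suc m}"
      show "x \<in> insert i (dl i ` {..m})"
      proof (cases "x < i")
        case True then have "x = dl i x" "x \<le> m" using assms by (auto simp: dl_def)
        then show ?thesis by blast
      next
        case False
        show ?thesis
        proof (cases "x = i")
          case False
          with \<open>\<not> x < i\<close> have "x = dl i (x - 1)" "x - 1 \<le> m" using x by (auto simp: dl_def)
          then show ?thesis by blast
        qed simp
      qed
    qed
  next
    show "insert i (dl i ` {..m}) \<subseteq> {..Suc m}" using assms by (auto simp: dl_def)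
  qed
  have nin: "i \<notin> dl i ` {..m}" by (auto simp: dl_def split: if_splits)
  show ?thesis unfolding eq using nin inj by (simp add: sum.reindex)
qed

lemma face_map_ev: "face_map i (ev k) = ev (dl i k)"
  by (auto simp: face_map_def ev_def dl_def fun_eq_iff)

lemma ev_std: "k \<le> m \<Longrightarrow> ev k \<in> std_simplex m"
  by (auto simp: std_simplex_def ev_def)

lemma face_map_dl: "t i = 0 \<Longrightarrow> face_map i (t \<circ> dl i) = t"
  by (auto simp: face_map_def dl_def fun_eq_iff)

lemma dl_std:
  assumes "t \<in> std_simplex (Suc m)" "i \<le> Suc m" "t i = 0"
  shows "t \<circ> dl i \<in> std_simplex m"
proof -
  have "(\<Sum>k\<le>Suc m. t k) = t i + (\<Sum>k\<le>m. (t \<circ> dl i) k)"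
    using sum_reindex_dl[OF assms(2)] by simp
  then have "(\<Sum>k\<le>m. (t \<circ> dl i) k) = 1" using assms by (simp add: std_simplex_def)
  moreover have "\<forall>j>m. (t \<circ> dl i) j = 0" using assms(1,2) by (auto simp: std_simplex_def dl_def)
  ultimately show ?thesis using assms(1) by (auto simp: std_simplex_def)
qed

lemma std0: "t \<in> std_simplex 0 \<longleftrightarrow> t = ev 0"
  apply (auto simp: std_simplex_def ev_def fun_eq_iff)
  by (metis gr0I order.refl zero_less_one_class.zero_le_one)

lemma open0: "open_simplex 0 = std_simplex 0"
  by (auto simp: open_simplex_def std0 ev_def)


locale dcx =
  fixes X :: "'x topology" and I :: "'c set" and dm :: "'c \<Rightarrow> nat"
    and \<sigma> :: "'c \<Rightarrow> (nat \<Rightarrow> real) \<Rightarrow> 'x"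
  assumes dc: "delta_complex X I dm \<sigma>"
begin

lemma D1: "c \<in> I \<Longrightarrow> continuous_map (simplex_top (dm c)) X (\<sigma> c)"
  using dc by (simp add: delta_complex_def)
lemma D2: "c \<in> I \<Longrightarrow> inj_on (\<sigma> c) (open_simplex (dm c))"
  using dc by (simp add: delta_complex_def)
lemma D3: "x \<in> topspace X \<Longrightarrow> \<exists>c\<in>I. x \<in> \<sigma> c ` open_simplex (dm c) \<and>
        (\<forall>c'\<in>I. x \<in> \<sigma> c' ` open_simplex (dm c') \<longrightarrow> c' = c)"
  using dc by (simp add: delta_complex_def)
lemma D4: "c \<in> I \<Longrightarrow> 0 < dm c \<Longrightarrow> i \<le> dm c \<Longrightarrow> \<exists>c'\<in>I. dm c' = dm c - 1 \<and>
        (\<forall>t\<in>std_simplex (dm c - 1). \<sigma> c (face_map i t) = \<sigma> c' t)"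
  using dc by (simp add: delta_complex_def)
lemma D5: "openin X U \<longleftrightarrow> U \<subseteq> topspace X \<and>
        (\<forall>c\<in>I. openin (simplex_top (dm c)) {t \<in> std_simplex (dm c). \<sigma> c t \<in> U})"
  using dc by (simp add: delta_complex_def)

lemma topspace_simplex[simp]: "topspace (simplex_top k) = std_simplex k"
  by (simp add: simplex_top_def)

lemma sig_in: "c \<in> I \<Longrightarrow> t \<in> std_simplex (dm c) \<Longrightarrow> \<sigma> c t \<in> topspace X"
  using D1 continuous_map_image_subset_topspace by fastforce

lemma open_sub: "open_simplex k \<subseteq> std_simplex k"
  by (auto simp: open_simplex_def)

lemma face_reduce:
  "c \<in> I \<Longrightarrow> t \<in> std_simplex (dm c) \<Longrightarrow> \<exists>c'\<in>I. \<exists>s \<in> open_simplex (dm c'). \<sigma> c t = \<sigma> c' s \<and>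
     (\<forall>P g. g 0 = 0 \<longrightarrow> (\<Sum>i\<le>dm c. if P (\<sigma> c (ev i)) then g (t i) else (0::real))
        = (\<Sum>j\<le>dm c'. if P (\<sigma> c' (ev j)) then g (s j) else 0))"
proof (induction "dm c" arbitrary: c t)
  case 0
  then have "t \<in> open_simplex (dm c)" using open0 by simp
  then show ?case using 0 by blast
next
  case (Suc m)
  show ?case
  proof (cases "t \<in> open_simplex (dm c)")
    case True then show ?thesis using Suc.prems by blast
  next
    case False
    then obtain i where i: "i \<le> Suc m" "\<not> 0 < t i"
      using Suc.prems Suc.hyps(2) unfolding open_simplex_def by auto
    moreover have "0 \<le> t i" using Suc.prems(2) by (simp add: std_simplex_def)
    ultimately have i: "i \<le> Suc m" "t i = 0" by linarith+
    obtain c'' where c'': "c'' \<in> I" "dm c'' = m"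
      "\<forall>r\<in>std_simplex m. \<sigma> c (face_map i r) = \<sigma> c'' r"
      using D4[OF Suc.prems(1), of i] Suc.hyps(2)[symmetric] i by auto
    have t': "t \<circ> dl i \<in> std_simplex (dm c'')"
      using dl_std[of t m i] Suc.prems Suc.hyps(2) i c'' by simp
    obtain c' s where cs: "c' \<in> I" "s \<in> open_simplex (dm c')" "\<sigma> c'' (t \<circ> dl i) = \<sigma> c' s"
      and sums: "\<forall>P g. g 0 = 0 \<longrightarrow> (\<Sum>k\<le>dm c''. if P (\<sigma> c'' (ev k)) then g ((t \<circ> dl i) k) else (0::real))
        = (\<Sum>j\<le>dm c'. if P (\<sigma> c' (ev j)) then g (s j) else 0)"
      using Suc.hyps(1)[OF c''(2)[symmetric] c''(1) t'] by blast
    have "\<sigma> c t = \<sigma> c' s"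
      using c''(3) t' c''(2) cs(3) face_map_dl[of t i, OF i(2)] by metis
    moreover have "(\<Sum>i\<le>dm c. if P (\<sigma> c (ev i)) then g (t i) else (0::real))
        = (\<Sum>j\<le>dm c'. if P (\<sigma> c' (ev j)) then g (s j) else 0)" if g0: "g 0 = 0" for P g
    proof -
      have "(\<Sum>k\<le>dm c. if P (\<sigma> c (ev k)) then g (t k) else (0::real))
          = (\<Sum>k\<le>m. if P (\<sigma> c (ev (dl i k))) then g (t (dl i k)) else (0::real))"
        using sum_reindex_dl[OF i(1), of "\<lambda>k. if P (\<sigma> c (ev k)) then g (t k) else (0::real)"]
          Suc.hyps(2) i g0 by simp
      also have "\<dots> = (\<Sum>k\<le>dm c''. if P (\<sigma> c'' (ev k)) then g ((t \<circ> dl i) k) else (0::real))"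
        using c'' by (intro sum.cong) (auto simp: face_map_ev[symmetric] ev_std)
      finally show ?thesis using sums g0 by simp
    qed
    ultimately show ?thesis using cs by blast
  qed
qed

definition cell :: "'x \<Rightarrow> 'c" where
  "cell y = (THE c. c \<in> I \<and> y \<in> \<sigma> c ` open_simplex (dm c))"
definition crd :: "'x \<Rightarrow> nat \<Rightarrow> real" where
  "crd y = (THE s. s \<in> open_simplex (dm (cell y)) \<and> \<sigma> (cell y) s = y)"

lemma canon:
  assumes c: "c \<in> I" and s: "s \<in> open_simplex (dm c)"
  shows "cell (\<sigma> c s) = c" "crd (\<sigma> c s) = s"
proof -
  have y: "\<sigma> c s \<in> topspace X" using sig_in[OF c] s open_sub by blast
  from D3[OF y] obtain c0 where c0: "c0 \<in> I" "\<forall>c'\<in>I. \<sigma> c s \<in> \<sigma> c' ` open_simplex (dm c') \<longrightarrow> c' = c0"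
    by blast
  have u: "\<And>c'. c' \<in> I \<and> \<sigma> c s \<in> \<sigma> c' ` open_simplex (dm c') \<Longrightarrow> c' = c"
    using c0 c s by blast
  show cc: "cell (\<sigma> c s) = c" unfolding cell_def
    by (rule the_equality) (use c s u in auto)
  show "crd (\<sigma> c s) = s" unfolding crd_def cc
    by (rule the_equality) (use s D2[OF c] in \<open>auto simp: inj_on_def\<close>)
qed

lemma canon_ex:
  assumes y: "y \<in> topspace X"
  shows "cell y \<in> I" "crd y \<in> open_simplex (dm (cell y))" "\<sigma> (cell y) (crd y) = y"
proof -
  from D3[OF y] obtain c s where "c \<in> I" "s \<in> open_simplex (dm c)" "y = \<sigma> c s" by blast
  then show "cell y \<in> I" "crd y \<in> open_simplex (dm (cell y))" "\<sigma> (cell y) (crd y) = y"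
    using canon by auto
qed

definition wt :: "('x \<Rightarrow> bool) \<Rightarrow> (real \<Rightarrow> real) \<Rightarrow> 'x \<Rightarrow> real" where
  "wt P g y = (\<Sum>j\<le>dm (cell y). if P (\<sigma> (cell y) (ev j)) then g (crd y j) else 0)"

lemma wt_rep:
  assumes "c \<in> I" "t \<in> std_simplex (dm c)" "g 0 = 0"
  shows "wt P g (\<sigma> c t) = (\<Sum>i\<le>dm c. if P (\<sigma> c (ev i)) then g (t i) else 0)"
proof -
  obtain c' s where "c' \<in> I" "s \<in> open_simplex (dm c')" "\<sigma> c t = \<sigma> c' s" and
    sm: "\<forall>P g. g 0 = 0 \<longrightarrow> (\<Sum>i\<le>dm c. if P (\<sigma> c (ev i)) then g (t i) else (0::real))
        = (\<Sum>j\<le>dm c'. if P (\<sigma> c' (ev j)) then g (s j) else 0)"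
    using face_reduce[OF assms(1,2)] by blast
  then show ?thesis unfolding wt_def \<open>\<sigma> c t = \<sigma> c' s\<close> canon[OF \<open>c' \<in> I\<close> \<open>s \<in> open_simplex (dm c')\<close>]
    using sm assms(3) by simp
qed

definition ind :: "real \<Rightarrow> real" where "ind r = (if r = 1 then 1 else 0)"

lemma open_lt1:
  assumes "s \<in> open_simplex n" "0 < n" "j \<le> n"
  shows "s j < 1"
proof (rule ccontr)
  assume "\<not> s j < 1"
  obtain k where k: "k \<le> n" "k \<noteq> j" using assms(2) by (cases "j = 0") (auto intro: exI[of _ 0] exI[of _ 1])
  have pos: "\<forall>i\<le>n. 0 < s i" and sum1: "(\<Sum>i\<le>n. s i) = 1" using assms(1) by (auto simp: open_simplex_def std_simplex_def)
  have "(\<Sum>i\<in>{j,k}. s i) \<le> (\<Sum>i\<le>n. s i)"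
    by (rule sum_mono2) (use assms(3) k pos in \<open>auto simp: less_imp_le\<close>)
  moreover have "0 < s k" using pos k by auto
  ultimately show False using k \<open>\<not> s j < 1\<close> sum1 by simp
qed

lemma vertex_iff:
  assumes "c \<in> I" "t \<in> std_simplex (dm c)"
  shows "dm (cell (\<sigma> c t)) = 0 \<longleftrightarrow> (\<exists>i\<le>dm c. t i = 1)"
proof -
  have y: "\<sigma> c t \<in> topspace X" using sig_in assms by blast
  have w: "wt (\<lambda>_. True) ind (\<sigma> c t) = (\<Sum>i\<le>dm c. ind (t i))"
    using wt_rep[OF assms, of ind "\<lambda>_. True"] by (simp add: ind_def)
  have "(\<Sum>i\<le>dm c. ind (t i)) \<noteq> 0 \<longleftrightarrow> (\<exists>i\<le>dm c. t i = 1)"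
    by (subst sum_nonneg_eq_0_iff) (auto simp: ind_def)
  moreover have "wt (\<lambda>_. True) ind (\<sigma> c t) \<noteq> 0 \<longleftrightarrow> dm (cell (\<sigma> c t)) = 0"
  proof -
    let ?y = "\<sigma> c t"
    have o: "crd ?y \<in> open_simplex (dm (cell ?y))" using canon_ex[OF y] by blast
    show ?thesis
    proof (cases "dm (cell ?y) = 0")
      case True
      then have "crd ?y = ev 0" using o open0 std0 by auto
      then show ?thesis using True by (simp add: wt_def ind_def ev_def)
    next
      case False
      then have "\<forall>j\<le>dm (cell ?y). crd ?y j < 1" using open_lt1[OF o] by auto
      then have "wt (\<lambda>_. True) ind ?y = 0" unfolding wt_def ind_def
        by (intro sum.neutral) fastforce
      then show ?thesis using False by simp
    qed
  qed
  ultimately show ?thesis using w by simp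
qed

lemma wt_sum1:
  assumes y: "y \<in> topspace X"
  shows "wt P (\<lambda>r. r) y + wt (\<lambda>z. \<not> P z) (\<lambda>r. r) y = 1"
proof -
  have o: "crd y \<in> open_simplex (dm (cell y))" using canon_ex[OF y] by blast
  have "wt P (\<lambda>r. r) y + wt (\<lambda>z. \<not> P z) (\<lambda>r. r) y = (\<Sum>j\<le>dm (cell y). crd y j)"
    unfolding wt_def sum.distrib[symmetric] by (rule sum.cong) auto
  then show ?thesis using o by (simp add: open_simplex_def std_simplex_def)
qed

definition gm :: "'x \<Rightarrow> 'c list \<times> (nat \<Rightarrow> real)" where
  "gm y = (if dm (cell y) = 0 then ([], ev 0) else ([cell y], crd y))"
definition JJ :: "'c list set" where
  "JJ = insert [] ((\<lambda>c. [c]) ` {c\<in>I. 0 < dm c})"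
definition dY :: "'c list \<Rightarrow> nat" where
  "dY xs = (if xs = [] then 0 else dm (hd xs))"
definition \<sigma>Y :: "'c list \<Rightarrow> (nat \<Rightarrow> real) \<Rightarrow> 'c list \<times> (nat \<Rightarrow> real)" where
  "\<sigma>Y xs t = (if xs = [] then ([], ev 0) else gm (\<sigma> (hd xs) t))"
definition SS :: "('c list \<times> (nat \<Rightarrow> real)) set" where
  "SS = insert ([], ev 0) (gm ` topspace X)"
definition OY :: "('c list \<times> (nat \<Rightarrow> real)) set \<Rightarrow> bool" where
  "OY U \<longleftrightarrow> U \<subseteq> SS \<and> (\<forall>c\<in>JJ. openin (simplex_top (dY c)) {t \<in> std_simplex (dY c). \<sigma>Y c t \<in> U})"
definition YY :: "('c list \<times> (nat \<Rightarrow> real)) topology" where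
  "YY = topology OY"

lemma gm_canon: "c \<in> I \<Longrightarrow> s \<in> open_simplex (dm c) \<Longrightarrow> 0 < dm c \<Longrightarrow> gm (\<sigma> c s) = ([c], s)"
  using canon by (simp add: gm_def)

lemma gm_vert: "dm (cell y) = 0 \<Longrightarrow> gm y = ([], ev 0)"
  by (simp add: gm_def)

lemma gm_nv: "0 < dm (cell y) \<Longrightarrow> gm y = ([cell y], crd y)"
  by (simp add: gm_def)

lemma gm_eq:
  assumes "y \<in> topspace X" "z \<in> topspace X" "gm y = gm z" "0 < dm (cell y)"
  shows "y = z" "0 < dm (cell z)"
proof -
  show z: "0 < dm (cell z)" using assms by (auto simp: gm_def split: if_splits)
  have "cell y = cell z" "crd y = crd z" using assms z by (auto simp: gm_def)
  then show "y = z" using canon_ex(3)[OF assms(1)] canon_ex(3)[OF assms(2)] by metis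
qed

lemma \<sigma>Y_in: "c \<in> JJ \<Longrightarrow> t \<in> std_simplex (dY c) \<Longrightarrow> \<sigma>Y c t \<in> SS"
  using sig_in by (auto simp: JJ_def dY_def \<sigma>Y_def SS_def)

lemma istop: "istopology OY"
  unfolding istopology_def
proof (intro conjI allI impI)
  fix S T assume ST: "OY S" "OY T"
  show "OY (S \<inter> T)" unfolding OY_def
  proof (intro conjI ballI)
    fix c assume "c \<in> JJ"
    then have "openin (simplex_top (dY c)) ({t \<in> std_simplex (dY c). \<sigma>Y c t \<in> S} \<inter> {t \<in> std_simplex (dY c). \<sigma>Y c t \<in> T})"
      using ST by (intro openin_Int) (auto simp: OY_def)
    moreover have "{t \<in> std_simplex (dY c). \<sigma>Y c t \<in> S} \<inter> {t \<in> std_simplex (dY c). \<sigma>Y c t \<in> T}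
        = {t \<in> std_simplex (dY c). \<sigma>Y c t \<in> S \<inter> T}" by auto
    ultimately show "openin (simplex_top (dY c)) {t \<in> std_simplex (dY c). \<sigma>Y c t \<in> S \<inter> T}" by simp
  qed (use ST in \<open>auto simp: OY_def\<close>)
next
  fix K assume K: "\<forall>k\<in>K. OY k"
  show "OY (\<Union>K)" unfolding OY_def
  proof (intro conjI ballI)
    show "\<Union>K \<subseteq> SS" using K by (auto simp: OY_def)
    fix c assume c: "c \<in> JJ"
    have "openin (simplex_top (dY c)) (\<Union>k\<in>K. {t \<in> std_simplex (dY c). \<sigma>Y c t \<in> k})"
      using K c by (intro openin_Union) (auto simp: OY_def)
    moreover have "(\<Union>k\<in>K. {t \<in> std_simplex (dY c). \<sigma>Y c t \<in> k}) = {t \<in> std_simplex (dY c). \<sigma>Y c t \<in> \<Union>K}"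
      by auto
    ultimately show "openin (simplex_top (dY c)) {t \<in> std_simplex (dY c). \<sigma>Y c t \<in> \<Union>K}" by simp
  qed
qed

lemma openY: "openin YY = OY"
  unfolding YY_def using istop by simp

lemma topY: "topspace YY = SS"
proof -
  have "OY SS" unfolding OY_def
  proof (intro conjI ballI)
    fix c assume c: "c \<in> JJ"
    have "{t \<in> std_simplex (dY c). \<sigma>Y c t \<in> SS} = topspace (simplex_top (dY c))"
      using \<sigma>Y_in[OF c] by auto
    then show "openin (simplex_top (dY c)) {t \<in> std_simplex (dY c). \<sigma>Y c t \<in> SS}"
      by (metis openin_topspace)
  qed simp
  then show ?thesis unfolding topspace_def openY OY_def by blast
qed

lemma open_std0: "A \<subseteq> std_simplex 0 \<Longrightarrow> openin (simplex_top 0) A"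
proof -
  assume A: "A \<subseteq> std_simplex 0"
  have "std_simplex 0 = {ev 0}" using std0 by auto
  then have "A = {} \<or> A = std_simplex 0" using A by (simp add: subset_singleton_iff)
  then show ?thesis using openin_topspace[of "simplex_top 0"] by auto
qed

lemma \<sigma>Y_cons: "\<sigma>Y [c] t = gm (\<sigma> c t)" by (simp add: \<sigma>Y_def)

lemma vert_ev0: "c \<in> I \<Longrightarrow> dm c = 0 \<Longrightarrow> t \<in> std_simplex 0 \<Longrightarrow> gm (\<sigma> c t) = ([], ev 0)"
  using canon[of c t] open0 by (simp add: gm_def)

lemma Y_delta: "delta_complex YY JJ dY \<sigma>Y"
  unfolding delta_complex_def
proof (intro conjI ballI allI impI)
  fix c assume c: "c \<in> JJ"
  show "continuous_map (simplex_top (dY c)) YY (\<sigma>Y c)"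
    unfolding continuous_map topY openY using \<sigma>Y_in[OF c] c by (auto simp: OY_def)
  show "inj_on (\<sigma>Y c) (open_simplex (dY c))"
  proof (cases "c = []")
    case True then show ?thesis using open0 std0 by (simp add: dY_def inj_on_def)
  next
    case False
    then obtain c0 where c0: "c = [c0]" "c0 \<in> I" "0 < dm c0" using c by (auto simp: JJ_def)
    show ?thesis unfolding inj_on_def c0(1) \<sigma>Y_cons using gm_canon[OF c0(2) _ c0(3)]
      by (simp add: dY_def)
  qed
next
  fix y assume y: "y \<in> topspace YY"
  have nn: "\<forall>c'\<in>JJ. \<forall>t\<in>open_simplex (dY c'). c' \<noteq> [] \<longrightarrow> \<sigma>Y c' t = (c', t)"
    using gm_canon by (auto simp: JJ_def dY_def \<sigma>Y_def)
  show "\<exists>c\<in>JJ. y \<in> \<sigma>Y c ` open_simplex (dY c) \<and>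
        (\<forall>c'\<in>JJ. y \<in> \<sigma>Y c' ` open_simplex (dY c') \<longrightarrow> c' = c)"
  proof (cases "y = ([], ev 0)")
    case True
    have "ev 0 \<in> open_simplex 0" using open0 std0 by simp
    then have "y \<in> \<sigma>Y [] ` open_simplex (dY [])" using True by (auto simp: \<sigma>Y_def dY_def)
    moreover have "\<forall>c'\<in>JJ. y \<in> \<sigma>Y c' ` open_simplex (dY c') \<longrightarrow> c' = []"
      using nn True by force
    ultimately show ?thesis by (auto simp: JJ_def)
  next
    case False
    then obtain x where x: "x \<in> topspace X" "y = gm x" using y by (auto simp: topY SS_def)
    then have nv: "0 < dm (cell x)" using False gm_vert by fastforce
    then have y2: "y = ([cell x], crd x)" using x gm_nv by simp
    have cJ: "[cell x] \<in> JJ" using canon_ex[OF x(1)] nv by (auto simp: JJ_def)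
    have "y \<in> \<sigma>Y [cell x] ` open_simplex (dY [cell x])"
      unfolding \<sigma>Y_cons dY_def using canon_ex[OF x(1)] y2 x nv
      by (intro image_eqI[of _ _ "crd x"]) auto
    moreover have "\<forall>c'\<in>JJ. y \<in> \<sigma>Y c' ` open_simplex (dY c') \<longrightarrow> c' = [cell x]"
    proof (intro ballI impI)
      fix c' assume c': "c' \<in> JJ" "y \<in> \<sigma>Y c' ` open_simplex (dY c')"
      show "c' = [cell x]"
      proof (cases "c' = []")
        case True then show ?thesis using c' y2 by (auto simp: \<sigma>Y_def)
      next
        case False then show ?thesis using c' nn y2 by force
      qed
    qed
    ultimately show ?thesis using cJ by blast
  qed
next
  fix c i assume c: "c \<in> JJ" and d: "0 < dY c" and i: "i \<le> dY c"
  then obtain c0 where c0: "c = [c0]" "c0 \<in> I" "0 < dm c0" by (auto simp: JJ_def dY_def)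
  obtain c1 where c1: "c1 \<in> I" "dm c1 = dm c0 - 1" "\<forall>t\<in>std_simplex (dm c0 - 1). \<sigma> c0 (face_map i t) = \<sigma> c1 t"
    using D4[OF c0(2,3), of i] i c0 by (auto simp: dY_def)
  show "\<exists>c'\<in>JJ. dY c' = dY c - 1 \<and> (\<forall>t\<in>std_simplex (dY c - 1). \<sigma>Y c (face_map i t) = \<sigma>Y c' t)"
  proof (cases "dm c1 = 0")
    case True
    have "\<forall>t\<in>std_simplex (dY c - 1). \<sigma>Y c (face_map i t) = \<sigma>Y [] t"
      using c1 True c0 vert_ev0[OF c1(1) True] by (auto simp: \<sigma>Y_def dY_def)
    moreover have "dY [] = dY c - 1" using c0 c1 True by (simp add: dY_def)
    ultimately show ?thesis by (auto simp: JJ_def)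
  next
    case False
    have "[c1] \<in> JJ" using c1 False by (auto simp: JJ_def)
    moreover have "\<forall>t\<in>std_simplex (dY c - 1). \<sigma>Y c (face_map i t) = \<sigma>Y [c1] t"
      using c1 c0 by (auto simp: \<sigma>Y_def dY_def)
    moreover have "dY [c1] = dY c - 1" using c0 c1 by (simp add: dY_def)
    ultimately show ?thesis by blast
  qed
next
  fix U
  show "openin YY U \<longleftrightarrow> U \<subseteq> topspace YY \<and>
        (\<forall>c\<in>JJ. openin (simplex_top (dY c)) {t \<in> std_simplex (dY c). \<sigma>Y c t \<in> U})"
    unfolding openY topY OY_def ..
qed

lemma zeroY: "card (zero_cells JJ dY) = 1"
proof -
  have "zero_cells JJ dY = {[]}" by (auto simp: zero_cells_def JJ_def dY_def)
  then show ?thesis by simp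
qed

lemma cont_ite: "continuous_on UNIV (\<lambda>x::nat\<Rightarrow>real. if b then x i else 0)"
  by (cases b) auto

lemma open_ne1: "open {t::nat\<Rightarrow>real. t i \<noteq> 1}"
  using open_Collect_neq[of "\<lambda>t::nat\<Rightarrow>real. t i" "\<lambda>_. 1"] by simp

lemma open_wt_set: "openin (simplex_top n) {t \<in> std_simplex n. a < (\<Sum>i\<le>n. if Q i then t i else (0::real))}"
proof -
  have "open {t::nat\<Rightarrow>real. a < (\<Sum>i\<le>n. if Q i then t i else 0)}"
    by (intro open_Collect_less continuous_intros cont_ite)
  then show ?thesis unfolding simplex_top_def openin_open by blast
qed

lemma open_ne1_set: "openin (simplex_top n) {t \<in> std_simplex n. \<forall>i\<le>n. t i \<noteq> 1}"
proof -
  have "open (\<Inter>i\<in>{..n}. {t::nat\<Rightarrow>real. t i \<noteq> 1})"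
    using open_ne1 by (intro open_INT) auto
  moreover have "{t \<in> std_simplex n. \<forall>i\<le>n. t i \<noteq> 1} = std_simplex n \<inter> (\<Inter>i\<in>{..n}. {t::nat\<Rightarrow>real. t i \<noteq> 1})"
    by auto
  ultimately show ?thesis unfolding simplex_top_def openin_open by blast
qed

lemma cont_gm: "continuous_map X YY gm"
  unfolding continuous_map topY openY
proof (intro conjI allI impI)
  show "gm ` topspace X \<subseteq> SS" by (auto simp: SS_def)
  fix U assume U: "OY U"
  show "openin X {x \<in> topspace X. gm x \<in> U}" unfolding D5
  proof (intro conjI ballI)
    fix c assume c: "c \<in> I"
    have eq: "{t \<in> std_simplex (dm c). \<sigma> c t \<in> {x \<in> topspace X. gm x \<in> U}} = {t \<in> std_simplex (dm c). gm (\<sigma> c t) \<in> U}"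
      using sig_in[OF c] by auto
    show "openin (simplex_top (dm c)) {t \<in> std_simplex (dm c). \<sigma> c t \<in> {x \<in> topspace X. gm x \<in> U}}"
    proof (cases "dm c = 0")
      case True show ?thesis unfolding True by (rule open_std0) auto
    next
      case False
      then have "[c] \<in> JJ" using c by (auto simp: JJ_def)
      then show ?thesis unfolding eq using U False by (auto simp: OY_def dY_def \<sigma>Y_def)
    qed
  qed auto
qed

lemma img_open:
  assumes W: "openin X W" and sat: "\<And>x w. x \<in> topspace X \<Longrightarrow> w \<in> W \<Longrightarrow> gm x = gm w \<Longrightarrow> x \<in> W"
  shows "openin YY (gm ` W)"
  unfolding openY OY_def
proof (intro conjI ballI)
  show "gm ` W \<subseteq> SS" using openin_subset[OF W] by (auto simp: SS_def)
  fix c assume c: "c \<in> JJ"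
  show "openin (simplex_top (dY c)) {t \<in> std_simplex (dY c). \<sigma>Y c t \<in> gm ` W}"
  proof (cases "c = []")
    case True
    then have "dY c = 0" by (simp add: dY_def)
    show ?thesis unfolding \<open>dY c = 0\<close> by (rule open_std0) auto
  next
    case False
    then obtain c0 where c0: "c = [c0]" "c0 \<in> I" using c by (auto simp: JJ_def)
    have "{t \<in> std_simplex (dY c). \<sigma>Y c t \<in> gm ` W} = {t \<in> std_simplex (dm c0). \<sigma> c0 t \<in> W}"
    proof (intro set_eqI iffI)
      fix t assume "t \<in> {t \<in> std_simplex (dY c). \<sigma>Y c t \<in> gm ` W}"
      then have t: "t \<in> std_simplex (dm c0)" "gm (\<sigma> c0 t) \<in> gm ` W" by (auto simp: c0 dY_def \<sigma>Y_def)
      then obtain w where "w \<in> W" "gm (\<sigma> c0 t) = gm w" by blast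
      then have "\<sigma> c0 t \<in> W" using sat sig_in[OF c0(2) t(1)] by blast
      then show "t \<in> {t \<in> std_simplex (dm c0). \<sigma> c0 t \<in> W}" using t by blast
    next
      fix t assume "t \<in> {t \<in> std_simplex (dm c0). \<sigma> c0 t \<in> W}"
      then show "t \<in> {t \<in> std_simplex (dY c). \<sigma>Y c t \<in> gm ` W}" by (auto simp: c0 dY_def \<sigma>Y_def)
    qed
    moreover have "dY c = dm c0" by (simp add: c0 dY_def)
    ultimately show ?thesis using W c0 D5 by auto
  qed
qed

lemma local_homeo:
  assumes U: "openin X U" and inj: "inj_on gm U"
    and om: "\<And>W. openin X W \<Longrightarrow> W \<subseteq> U \<Longrightarrow> \<exists>T. openin YY T \<and> gm ` W = T \<inter> gm ` U"
  shows "homeomorphic_map (subtopology X U) (subtopology YY (gm ` U)) gm"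
proof (rule bijective_open_imp_homeomorphic_map)
  have Us: "U \<subseteq> topspace X" using openin_subset[OF U] .
  show "continuous_map (subtopology X U) (subtopology YY (gm ` U)) gm"
    using cont_gm Us by (auto simp: continuous_map_in_subtopology intro: continuous_map_from_subtopology)
  show "open_map (subtopology X U) (subtopology YY (gm ` U)) gm"
    unfolding open_map_def
  proof (intro allI impI)
    fix W assume "openin (subtopology X U) W"
    then have "openin X W" "W \<subseteq> U" using openin_open_subtopology[OF U] by auto
    then obtain T where "openin YY T" "gm ` W = T \<inter> gm ` U" using om by blast
    then show "openin (subtopology YY (gm ` U)) (gm ` W)" unfolding openin_subtopology by blast
  qed
  have "gm ` U \<subseteq> topspace YY" using Us by (auto simp: topY SS_def)
  then show "gm ` topspace (subtopology X U) = topspace (subtopology YY (gm ` U))"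
    using Us by auto
  show "inj_on gm (topspace (subtopology X U))" using inj by (simp add: inj_on_subset)
qed

lemma nv_open: "openin X {y \<in> topspace X. 0 < dm (cell y)}"
  unfolding D5
proof (intro conjI ballI)
  fix c assume c: "c \<in> I"
  have eq: "{t \<in> std_simplex (dm c). \<sigma> c t \<in> {y \<in> topspace X. 0 < dm (cell y)}} = {t \<in> std_simplex (dm c). \<forall>i\<le>dm c. t i \<noteq> 1}"
  proof (intro set_eqI)
    fix t show "t \<in> {t \<in> std_simplex (dm c). \<sigma> c t \<in> {y \<in> topspace X. 0 < dm (cell y)}} \<longleftrightarrow> t \<in> {t \<in> std_simplex (dm c). \<forall>i\<le>dm c. t i \<noteq> 1}"
    proof (cases "t \<in> std_simplex (dm c)")
      case True
      then show ?thesis using sig_in[OF c True] vertex_iff[OF c True] by auto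
    qed simp
  qed
  show "openin (simplex_top (dm c)) {t \<in> std_simplex (dm c). \<sigma> c t \<in> {y \<in> topspace X. 0 < dm (cell y)}}"
    unfolding eq by (rule open_ne1_set)
qed auto

lemma wt_open: "openin X {y \<in> topspace X. 1/2 < wt P (\<lambda>r. r) y}"
  unfolding D5
proof (intro conjI ballI)
  fix c assume c: "c \<in> I"
  have eq: "{t \<in> std_simplex (dm c). \<sigma> c t \<in> {y \<in> topspace X. 1/2 < wt P (\<lambda>r. r) y}} =
     {t \<in> std_simplex (dm c). 1/2 < (\<Sum>i\<le>dm c. if P (\<sigma> c (ev i)) then t i else (0::real))}"
    using sig_in[OF c] wt_rep[OF c, of _ "\<lambda>r. r" P] by auto
  show "openin (simplex_top (dm c)) {t \<in> std_simplex (dm c). \<sigma> c t \<in> {y \<in> topspace X. 1/2 < wt P (\<lambda>r. r) y}}"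
    unfolding eq by (rule open_wt_set)
qed auto

lemma vert_wt:
  assumes y: "y \<in> topspace X" and v: "dm (cell y) = 0"
  shows "wt P (\<lambda>r. r) y = (if P y then 1 else 0)"
proof -
  have "crd y = ev 0" using canon_ex(2)[OF y] v open0 std0 by simp
  moreover have "\<sigma> (cell y) (ev 0) = y" using canon_ex(3)[OF y] calculation by simp
  ultimately show ?thesis using v by (simp add: wt_def ev_def)
qed

lemma loc:
  assumes x: "x \<in> topspace X"
  shows "\<exists>U. openin X U \<and> x \<in> U \<and> homeomorphic_map (subtopology X U) (subtopology YY (gm ` U)) gm"
proof (cases "0 < dm (cell x)")
  case True
  define U where "U = {y \<in> topspace X. 0 < dm (cell y)}"
  have Uo: "openin X U" using nv_open by (simp add: U_def)
  have "homeomorphic_map (subtopology X U) (subtopology YY (gm ` U)) gm"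
  proof (rule local_homeo[OF Uo])
    show "inj_on gm U" unfolding inj_on_def U_def using gm_eq by blast
    fix W assume W: "openin X W" "W \<subseteq> U"
    have "openin YY (gm ` W)"
    proof (rule img_open[OF W(1)])
      fix y w assume "y \<in> topspace X" "w \<in> W" "gm y = gm w"
      then show "y \<in> W" using W(2) gm_eq(1)[of w y] by (auto simp: U_def)
    qed
    moreover have "gm ` W = gm ` W \<inter> gm ` U" using W(2) by auto
    ultimately show "\<exists>T. openin YY T \<and> gm ` W = T \<inter> gm ` U" by blast
  qed
  then show ?thesis using Uo x True by (auto simp: U_def)
next
  case False
  then have xv: "dm (cell x) = 0" by simp
  define U where "U = {y \<in> topspace X. 1/2 < wt (\<lambda>z. z = x) (\<lambda>r. r) y}"
  define N where "N = {y \<in> topspace X. 1/2 < wt (\<lambda>z. z \<noteq> x) (\<lambda>r. r) y}"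
  have Uo: "openin X U" unfolding U_def by (rule wt_open)
  have No: "openin X N" unfolding N_def by (rule wt_open)
  have xU: "x \<in> U" using vert_wt[OF x xv] x by (simp add: U_def)
  have nN: "y \<notin> N" if yU: "y \<in> U" for y
  proof
    assume yN: "y \<in> N"
    have s: "wt (\<lambda>z. z = x) (\<lambda>r. r) y + wt (\<lambda>z. z \<noteq> x) (\<lambda>r. r) y = 1"
      using wt_sum1[of y "\<lambda>z. z = x"] yU by (simp add: U_def)
    have "1/2 < wt (\<lambda>z. z = x) (\<lambda>r. r) y" "1/2 < wt (\<lambda>z. z \<noteq> x) (\<lambda>r. r) y"
      using yU yN by (simp_all add: U_def N_def)
    then show False using s by linarith
  qed
  have disj: "U \<inter> N = {}" using nN by blast
  have Uv: "\<And>y. y \<in> U \<Longrightarrow> dm (cell y) = 0 \<Longrightarrow> y = x"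
  proof -
    fix y assume "y \<in> U" "dm (cell y) = 0"
    then show "y = x" using vert_wt[of y "\<lambda>z. z = x"] by (auto simp: U_def split: if_splits)
  qed
  have Nv: "\<And>y. y \<in> topspace X \<Longrightarrow> dm (cell y) = 0 \<Longrightarrow> y \<noteq> x \<Longrightarrow> y \<in> N"
    using vert_wt by (simp add: N_def)
  have Us: "U \<subseteq> topspace X" by (auto simp: U_def)
  have "homeomorphic_map (subtopology X U) (subtopology YY (gm ` U)) gm"
  proof (rule local_homeo[OF Uo])
    show "inj_on gm U" unfolding inj_on_def
    proof (intro ballI impI)
      fix u v assume uv: "u \<in> U" "v \<in> U" "gm u = gm v"
      show "u = v"
      proof (cases "0 < dm (cell u)")
        case True then show ?thesis using gm_eq(1)[of u v] uv Us by auto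
      next
        case False
        show ?thesis
        proof (cases "0 < dm (cell v)")
          case True then show ?thesis using gm_eq(1)[of v u] uv Us by auto
        next
          case False2: False
          then show ?thesis using False Uv uv by auto
        qed
      qed
    qed
    fix W assume W: "openin X W" "W \<subseteq> U"
    show "\<exists>T. openin YY T \<and> gm ` W = T \<inter> gm ` U"
    proof (cases "x \<in> W")
      case True
      have "openin YY (gm ` (W \<union> N))"
      proof (rule img_open)
        show "openin X (W \<union> N)" using W(1) No by (rule openin_Un)
        fix y w assume yw: "y \<in> topspace X" "w \<in> W \<union> N" "gm y = gm w"
        show "y \<in> W \<union> N"
        proof (cases "0 < dm (cell y)")
          case True
          have "w \<in> topspace X" using yw W(2) Us by (auto simp: N_def)
          then show ?thesis using gm_eq(1)[of y w] yw True by auto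
        next
          case False
          then show ?thesis using Nv[OF yw(1)] True by (cases "y = x") auto
        qed
      qed
      moreover have "gm ` W = gm ` (W \<union> N) \<inter> gm ` U"
      proof
        show "gm ` W \<subseteq> gm ` (W \<union> N) \<inter> gm ` U" using W(2) by auto
        show "gm ` (W \<union> N) \<inter> gm ` U \<subseteq> gm ` W"
        proof
          fix z assume "z \<in> gm ` (W \<union> N) \<inter> gm ` U"
          then obtain v u where vu: "v \<in> W \<union> N" "u \<in> U" "z = gm v" "z = gm u" by blast
          show "z \<in> gm ` W"
          proof (cases "v \<in> W")
            case True then show ?thesis using vu by blast
          next
            case False
            then have vN: "v \<in> N" using vu by blast
            show ?thesis
            proof (cases "0 < dm (cell u)")
              case True
              have "u = v" using gm_eq(1)[of u v] vu vN True Us by (auto simp: N_def)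
              then show ?thesis using vu vN disj by blast
            next
              case False
              then have "u = x" using Uv vu by auto
              then show ?thesis using vu \<open>x \<in> W\<close> by blast
            qed
          qed
        qed
      qed
      ultimately show ?thesis by blast
    next
      case False
      have "openin YY (gm ` W)"
      proof (rule img_open[OF W(1)])
        fix y w assume yw: "y \<in> topspace X" "w \<in> W" "gm y = gm w"
        have wU: "w \<in> U" using yw W(2) by auto
        then have "0 < dm (cell w)" using Uv False yw(2) by (metis neq0_conv)
        then show "y \<in> W" using gm_eq(1)[of w y] yw Us wU by auto
      qed
      moreover have "gm ` W = gm ` W \<inter> gm ` U" using W(2) by auto
      ultimately show ?thesis by blast
    qed
  qed
  then show ?thesis using Uo xU by blast
qed

lemma main:
  "\<exists>(Y :: ('c list \<times> (nat \<Rightarrow> real)) topology) (J :: 'c list set) dimY \<sigma>Y f.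
           delta_complex Y J dimY \<sigma>Y \<and> card (zero_cells J dimY) = 1 \<and>
           delta_immersion X I dm \<sigma> Y J dimY \<sigma>Y f"
proof (intro exI conjI)
  show "delta_complex YY JJ dY \<sigma>Y" by (rule Y_delta)
  show "card (zero_cells JJ dY) = 1" by (rule zeroY)
  show "delta_immersion X I dm \<sigma> YY JJ dY \<sigma>Y gm"
    unfolding delta_immersion_def
  proof (intro conjI)
    show "continuous_map X YY gm" by (rule cont_gm)
    show "\<exists>\<phi>. \<forall>c\<in>I. \<phi> c \<in> JJ \<and> dY (\<phi> c) = dm c \<and>
        (\<forall>t\<in>std_simplex (dm c). gm (\<sigma> c t) = \<sigma>Y (\<phi> c) t)"
    proof (rule exI[of _ "\<lambda>c. if dm c = 0 then [] else [c]"], intro ballI)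
      fix c assume c: "c \<in> I"
      have 1: "(if dm c = 0 then [] else [c]) \<in> JJ" using c by (auto simp: JJ_def)
      have 2: "dY (if dm c = 0 then [] else [c]) = dm c" by (simp add: dY_def)
      have 3: "\<forall>t\<in>std_simplex (dm c). gm (\<sigma> c t) = \<sigma>Y (if dm c = 0 then [] else [c]) t"
        using vert_ev0[OF c] by (auto simp: \<sigma>Y_def)
      show "(if dm c = 0 then [] else [c]) \<in> JJ \<and> dY (if dm c = 0 then [] else [c]) = dm c \<and>
        (\<forall>t\<in>std_simplex (dm c). gm (\<sigma> c t) = \<sigma>Y (if dm c = 0 then [] else [c]) t)"
        using 1 2 3 by blast
    qed
    show "\<forall>x\<in>topspace X. \<exists>U. openin X U \<and> x \<in> U \<and>
        homeomorphic_map (subtopology X U) (subtopology YY (gm ` U)) gm"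
      using loc by blast
  qed
qed

end

theorem mainTheorem3:
  fixes X :: "'x topology" and I :: "'c set" and dm :: "'c \<Rightarrow> nat"
    and \<sigma> :: "'c \<Rightarrow> (nat \<Rightarrow> real) \<Rightarrow> 'x"
  assumes "delta_complex X I dm \<sigma>"
    and "connected_space X"
    and "finite_dimensional I dm"
  shows "\<exists>(Y :: ('c list \<times> (nat \<Rightarrow> real)) topology) (J :: 'c list set) dimY \<sigma>Y f.
           delta_complex Y J dimY \<sigma>Y \<and> card (zero_cells J dimY) = 1 \<and>
           delta_immersion X I dm \<sigma> Y J dimY \<sigma>Y f"
  by (rule dcx.main[OF dcx.intro[OF assms(1)]])

end
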